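(* Let $N>2$, $1<p<N$, and assume (H1)–(H4). For $a>0$ let $v_a$ be the solution on $[0,T]$ of $$(|v'(t)|^{p-2}v'(t))'+h(t)f(v(t))=0,\qquad v(0)=0,\ v'(0)=a.$$ Then $\max_{[0,T]}v_a\to\infty$ as $a\to\infty$.
   Context: Standing hypotheses. $f:\mathbb{R}\setminus\{0\}\to\mathbb{R}$ is odd and locally Lipschitz, and: (H1) there is a locally Lipschitz $g_1:\mathbb{R}\to\mathbb{R}$ and $l>p-1$ with $f(u)=|u|^{l-1}u+g_1(u)$ for all large $|u|$, and $\lim_{u\to\infty}|g_1(u)|/|u|^l=0$; (H2) there is a locally Lipschitz $g_2:\mathbb{R}\to\mathbb{R}$ with $g_2(0)=0$ and $0<m<1$ such that $f(u)=-\frac{1}{|u|^{m-1}u}+g_2(u)$ for all small $|u|\neq 0$; (H3) $f$ has a unique positive zero $\beta$, with $f<0$ on $(0,\beta)$ and $f>0$ on $(\beta,\infty)$; (H4) $K>0$ and $K'$ are continuous on $[R,\infty)$ (for a fixed $R>0$), $\frac{rK'(r)}{K(r)}>-\frac{(N-1)p}{p-1}$ on $[R,\infty)$, and there are constants $K_0,K_1>0$ with $\frac{K_0}{r^{\alpha}}\le K(r)\le \frac{K_1}{r^{\alpha_1}}$ on $[R,\infty)$, where $N+\frac{m(N-p)}{p-1}<\alpha_1\le\alpha<2(N-1)$. Notation: $T=R^{\frac{p-N}{p-1}}$ and, for $0<t\le T$, $h(t)=\left(\frac{N-p}{p-1}\right)^{-p}t^{\frac{p(N-1)}{p-N}}K\!\left(t^{\frac{p-1}{p-N}}\right)>0$.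 A solution of the initial value problem on an interval $[0,d]$ means $v\in C^1[0,d]$ such that $t\mapsto h(t)f(v(t))$ is integrable on $(0,t)$ for each $t\le d$ and $|v'(t)|^{p-2}v'(t)=a^{p-1}-\int_0^t h(s)f(v(s))\,ds$, $v(0)=0$; it exists uniquely on $[0,T]$ for each $a>0$. *)

theory Defs
  imports "HOL-Analysis.Analysis"
begin

definition loc_lipschitz_on :: "real set \<Rightarrow> (real \<Rightarrow> real) \<Rightarrow> bool" where
  "loc_lipschitz_on S g \<longleftrightarrow>
     (\<forall>x\<in>S. \<exists>e>0. \<exists>L. L-lipschitz_on (cball x e \<inter> S) g)"

definition hfun :: "nat \<Rightarrow> real \<Rightarrow> (real \<Rightarrow> real) \<Rightarrow> real \<Rightarrow> real" where
  "hfun N p K t =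
     ((real N - p) / (p - 1)) powr (- p) * t powr (p * (real N - 1) / (p - real N))
       * K (t powr ((p - 1) / (p - real N)))"

text \<open>v is a solution of the initial value problem (with initial slope a) on [0,d]:
  v is C^1 on [0,d], v(0)=0, h (f o v) is integrable on (0,t) for each t \<le> d, and
  |v'(t)|^(p-2) v'(t) = a^(p-1) - int_0^t h(s) f(v(s)) ds.\<close>
definition ivp_solution ::
  "(real \<Rightarrow> real) \<Rightarrow> (real \<Rightarrow> real) \<Rightarrow> real \<Rightarrow> real \<Rightarrow> (real \<Rightarrow> real) \<Rightarrow> real \<Rightarrow> bool" where
  "ivp_solution h f p a v d \<longleftrightarrow>
     v 0 = 0 \<and>
     (\<exists>v'. (\<forall>t\<in>{0..d}. (v has_real_derivative v' t) (at t within {0..d})) \<and>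
           continuous_on {0..d} v' \<and>
           (\<forall>t\<in>{0..d}. (\<lambda>s. h s * f (v s)) absolutely_integrable_on {0<..<t} \<and>
              \<bar>v' t\<bar> powr (p - 2) * v' t
                = a powr (p - 1) - integral {0<..<t} (\<lambda>s. h s * f (v s))))"

end

theory Submission
  imports Defs
begin

lemma mvt_deriv:
  fixes v v' :: "real \<Rightarrow> real"
  assumes "0 < s" "s \<le> T"
    and d: "\<forall>t\<in>{0..T}. (v has_real_derivative v' t) (at t within {0..T})"
  shows "\<exists>x\<in>{0<..<s}. v s - v 0 = v' x * s"
proof -
  have "\<exists>x\<in>{0<..<s}. v s - v 0 = (\<lambda>h. v' x * h) (s - 0)"
  proof (rule mvt_simple[OF \<open>0 < s\<close>])
    fix x assume "0 \<le> x" "x \<le> s"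
    then have "(v has_real_derivative v' x) (at x within {0..T})" using d assms by auto
    then have "(v has_real_derivative v' x) (at x within {0..s})"
      by (rule DERIV_subset) (use assms in auto)
    then show "(v has_derivative (\<lambda>h. v' x * h)) (at x within {0..s})"
      by (simp add: has_field_derivative_def)
  qed
  then show ?thesis by (auto simp: mult.commute)
qed

lemma partC:
  fixes h f v :: "real \<Rightarrow> real"
  assumes T: "T > 0" and p: "p > 1" and a: "a > 0"
    and sol: "ivp_solution h f p a v T"
    and hint: "\<forall>t\<in>{0..T}. h integrable_on {0<..<t} \<and> integral {0<..<t} h \<le> H \<and> (\<forall>s\<in>{0<..<t}. 0 \<le> h s)"
    and fC: "\<forall>u. 0 < u \<and> u < M \<longrightarrow> f u \<le> C" and C: "C \<ge> 0"
    and vM: "\<forall>t\<in>{0..T}. v t < M"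
    and aB: "C * H + B powr (p - 1) \<le> a powr (p - 1)" and B: "B > 0"
  shows "v T \<ge> B * T"
proof -
  obtain v' where v0: "v 0 = 0" and d: "\<forall>t\<in>{0..T}. (v has_real_derivative v' t) (at t within {0..T})"
    and cv': "continuous_on {0..T} v'"
    and eq: "\<forall>t\<in>{0..T}. (\<lambda>s. h s * f (v s)) absolutely_integrable_on {0<..<t} \<and>
              \<bar>v' t\<bar> powr (p - 2) * v' t = a powr (p - 1) - integral {0<..<t} (\<lambda>s. h s * f (v s))"
    using sol unfolding ivp_solution_def by blast
  have I1: "v' t \<ge> B" if t: "t \<in> {0..T}" and pos: "\<forall>s\<in>{0<..<t}. 0 < v s" for t
  proof -
    have hi: "h integrable_on {0<..<t}" "integral {0<..<t} h \<le> H" "\<forall>s\<in>{0<..<t}. 0 \<le> h s"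
      using hint t by auto
    have fi: "(\<lambda>s. h s * f (v s)) integrable_on {0<..<t}"
      using eq t absolutely_integrable_on_def by blast
    have "integral {0<..<t} (\<lambda>s. h s * f (v s)) \<le> integral {0<..<t} (\<lambda>s. C * h s)"
    proof (rule integral_le[OF fi])
      show "(\<lambda>s. C * h s) integrable_on {0<..<t}" using integrable_on_cmult_left[OF hi(1), of C] by simp
      fix s assume s: "s \<in> {0<..<t}"
      then have "s \<in> {0..T}" using t by auto
      then have "f (v s) \<le> C" using fC pos s vM by auto
      moreover have "0 \<le> h s" using hi(3) s by auto
      ultimately show "h s * f (v s) \<le> C * h s" by (metis mult.commute mult_left_mono)
    qed
    also have "\<dots> = C * integral {0<..<t} h" by simp
    also have "\<dots> \<le> C * H" using hi(2) C by (simp add: mult_left_mono)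
    finally have "\<bar>v' t\<bar> powr (p - 2) * v' t \<ge> B powr (p - 1)" using eq t aB by auto
    moreover have "B powr (p - 1) > 0" using B by simp
    ultimately have pos': "v' t > 0"
      by (smt (verit, best) mult_nonneg_nonpos powr_ge_zero)
    have "v' t powr (p - 1) = v' t powr (p - 2 + 1)" by simp
    also have "\<dots> = v' t powr (p - 2) * v' t powr 1" by (rule powr_add)
    also have "\<dots> = \<bar>v' t\<bar> powr (p - 2) * v' t" using pos' by simp
    finally have "\<bar>v' t\<bar> powr (p - 2) * v' t = v' t powr (p - 1)" by simp
    with \<open>\<bar>v' t\<bar> powr (p - 2) * v' t \<ge> B powr (p - 1)\<close> have "v' t powr (p - 1) \<ge> B powr (p - 1)" by simp
    then show ?thesis using pos' B p
      by (metis linorder_not_le powr_less_mono2 diff_gt_0_iff_gt less_eq_real_def)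
  qed
  have I2: "\<forall>t\<in>{0..T}. v' t > 0"
  proof (rule ccontr)
    assume neg: "\<not> ?thesis"
    define S where "S = {0..T} \<inter> v' -` {..0}"
    have Sne: "S \<noteq> {}" using neg unfolding S_def by force
    have cS: "closed S" unfolding S_def
      by (rule continuous_closed_preimage[OF cv']) auto
    have bS: "bdd_below S" unfolding S_def by (auto intro: bdd_belowI[of _ 0])
    define t1 where "t1 = Inf S"
    have t1S: "t1 \<in> S" unfolding t1_def using closed_contains_Inf[OF Sne bS cS] .
    have lt: "v' s > 0" if "s \<in> {0..T}" "s < t1" for s
    proof (rule ccontr)
      assume "\<not> v' s > 0"
      then have "s \<in> S" using that unfolding S_def by auto
      then have "t1 \<le> s" unfolding t1_def using bS by (rule cInf_lower)
      with that show False by simp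
    qed
    have t1T: "t1 \<in> {0..T}" using t1S unfolding S_def by auto
    have "\<forall>s\<in>{0<..<t1}. 0 < v s"
    proof
      fix s assume s: "s \<in> {0<..<t1}"
      then obtain x where x: "x \<in> {0<..<s}" "v s - v 0 = v' x * s"
        using mvt_deriv[of s T v v'] d t1T by auto
      have "v' x > 0" using lt[of x] x s t1T by auto
      then show "0 < v s" using x s v0 by simp
    qed
    then have "v' t1 \<ge> B" using I1 t1T by blast
    then show False using t1S B unfolding S_def by auto
  qed
  obtain x where x: "x \<in> {0<..<T}" "v T - v 0 = v' x * T"
    using mvt_deriv[of T T v v'] d T by auto
  have "\<forall>s\<in>{0<..<x}. 0 < v s"
  proof
    fix s assume s: "s \<in> {0<..<x}"
    then obtain y where y: "y \<in> {0<..<s}" "v s - v 0 = v' y * s"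
      using mvt_deriv[of s T v v'] d x by auto
    have "v' y > 0" using I2 y s x by auto
    then show "0 < v s" using y s v0 by simp
  qed
  then have vx: "v' x \<ge> B" using I1 x by auto
  have "v T = v' x * T" using x(2) v0 by simp
  moreover have "B * T \<le> v' x * T" using vx T by (intro mult_right_mono) auto
  ultimately show ?thesis by simp
qed


lemma partB:
  fixes N :: nat and p R K1 \<alpha>1 :: real and K K' :: "real \<Rightarrow> real"
  assumes p: "1 < p" "p < real N" and R: "R > 0" and K1: "K1 > 0"
    and Kpos: "\<forall>r\<ge>R. K r > 0"
    and Kd: "\<forall>r\<ge>R. (K has_real_derivative K' r) (at r within {R..})"
    and Kb: "\<forall>r\<ge>R. K r \<le> K1 / r powr \<alpha>1"
    and a1: "\<alpha>1 > real N"
  shows "\<exists>H\<ge>0. \<forall>t\<in>{0..R powr ((p - real N) / (p - 1))}. hfun N p K integrable_on {0<..<t}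
           \<and> integral {0<..<t} (hfun N p K) \<le> H \<and> (\<forall>s\<in>{0<..<t}. 0 \<le> hfun N p K s)"
proof -
  define T where "T = R powr ((p - real N) / (p - 1))"
  define e where "e = (p - 1) / (p - real N)"
  define a where "a = p * (real N - 1) / (p - real N)"
  define c0 where "c0 = ((real N - p) / (p - 1)) powr (- p)"
  define \<gamma> where "\<gamma> = a - e * \<alpha>1"
  define g where "g = (\<lambda>s::real. c0 * K1 * s powr \<gamma>)"
  have hdef: "hfun N p K = (\<lambda>s. c0 * s powr a * K (s powr e))"
    unfolding hfun_def c0_def a_def e_def by (intro ext) simp
  have T: "T > 0" unfolding T_def using R by simp
  have e: "e < 0" unfolding e_def using p by (simp add: divide_pos_neg)
  have c0: "c0 > 0" unfolding c0_def using p by simp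
  have d: "p - real N \<noteq> 0" using p by auto
  have g1: "\<gamma> = (p * (real N - 1) - (p - 1) * \<alpha>1) / (p - real N)"
    unfolding \<gamma>_def a_def e_def using d by (simp add: divide_simps)
  have "\<gamma> + 1 = (p - 1) * (real N - \<alpha>1) / (p - real N)"
    unfolding g1 using d by (simp add: divide_simps) (simp add: algebra_simps)
  moreover have "(p - 1) * (real N - \<alpha>1) / (p - real N) > 0"
    using p a1 by (intro divide_neg_neg) (auto simp: mult_pos_neg)
  ultimately have \<gamma>: "\<gamma> > -1" by linarith
  have Te: "T powr e = R" unfolding T_def e_def powr_powr using p R by simp
  have rge: "s powr e \<ge> R" if "0 < s" "s \<le> T" for s
    using powr_mono2'[of e s T] that e Te by simp
  have hpos: "hfun N p K s > 0" if "0 < s" "s \<le> T" for s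
    unfolding hdef using c0 Kpos rge[OF that] that by simp
  have hle: "hfun N p K s \<le> g s" if s: "0 < s" "s \<le> T" for s
  proof -
    have "K (s powr e) \<le> K1 / (s powr e) powr \<alpha>1" using Kb rge[OF s] by auto
    also have "\<dots> = K1 / s powr (e * \<alpha>1)" by (simp add: powr_powr)
    finally have "c0 * s powr a * K (s powr e) \<le> c0 * s powr a * (K1 / s powr (e * \<alpha>1))"
      using c0 by (intro mult_left_mono) auto
    also have "\<dots> = c0 * K1 * (s powr a / s powr (e * \<alpha>1))" by simp
    also have "\<dots> = g s" unfolding g_def \<gamma>_def by (simp add: powr_diff)
    finally show ?thesis unfolding hdef .
  qed
  have Kc: "continuous_on {R..} K"
    using Kd by (metis DERIV_continuous atLeast_iff continuous_on_eq_continuous_within)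
  have hc: "continuous_on {0<..T} (hfun N p K)"
    unfolding hdef
  proof (intro continuous_intros)
    show "continuous_on {0<..T} (\<lambda>x. K (x powr e))"
      by (rule continuous_on_compose2[OF Kc]) (auto intro!: continuous_intros rge)
  qed auto
  have gi0: "g integrable_on {0..t}" if "t \<ge> 0" for t
    unfolding g_def using integrable_on_cmult_left[OF integrable_on_powr_from_0[OF \<gamma> that], of "c0 * K1"]
    by simp
  have gi: "g integrable_on {0<..<t}" if "t \<ge> 0" for t
  proof (rule integrable_spike_set[OF gi0[OF that]])
    show "negligible {x \<in> {0..t} - {0<..<t}. g x \<noteq> 0}"
      by (rule negligible_subset[of "{0, t}"]) auto
    have E: "{x \<in> {0<..<t} - {0..t}. g x \<noteq> 0} = {}" by auto
    show "negligible {x \<in> {0<..<t} - {0..t}. g x \<noteq> 0}" unfolding E by simp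
  qed
  define H where "H = integral {0..T} g"
  have gnn: "g s \<ge> 0" for s unfolding g_def using c0 K1 by simp
  have H: "H \<ge> 0" unfolding H_def using gi0 T gnn by (intro integral_nonneg) auto
  have "\<forall>t\<in>{0..T}. hfun N p K integrable_on {0<..<t}
           \<and> integral {0<..<t} (hfun N p K) \<le> H \<and> (\<forall>s\<in>{0<..<t}. 0 \<le> hfun N p K s)"
  proof
    fix t assume t: "t \<in> {0..T}"
    have hn: "\<forall>s\<in>{0<..<t}. 0 \<le> hfun N p K s" using hpos t by (auto simp: less_imp_le)
    have "hfun N p K absolutely_integrable_on {0<..<t}"
    proof (rule measurable_bounded_by_integrable_imp_absolutely_integrable)
      show "hfun N p K \<in> borel_measurable (lebesgue_on {0<..<t})"
        by (rule continuous_imp_measurable_on_sets_lebesgue)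
          (use t in \<open>auto intro: continuous_on_subset[OF hc]\<close>)
      show "g integrable_on {0<..<t}" using gi t by auto
      fix x assume "x \<in> {0<..<t}"
      then show "norm (hfun N p K x) \<le> g x" using hle hpos t by (auto simp: less_imp_le)
    qed auto
    then have hi: "hfun N p K integrable_on {0<..<t}" using absolutely_integrable_on_def by blast
    have "integral {0<..<t} (hfun N p K) \<le> integral {0<..<t} g"
      using hi gi t hle by (intro integral_le) auto
    also have "\<dots> \<le> H" unfolding H_def
      using gi t gi0 T gnn by (intro integral_subset_le) auto
    finally show "hfun N p K integrable_on {0<..<t}
           \<and> integral {0<..<t} (hfun N p K) \<le> H \<and> (\<forall>s\<in>{0<..<t}. 0 \<le> hfun N p K s)"
      using hi hn by auto
  qed
  then show ?thesis using H unfolding T_def by blast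
qed


lemma partA:
  fixes f :: "real \<Rightarrow> real"
  assumes fl: "loc_lipschitz_on (- {0}) f" and b: "\<beta> > 0"
    and neg: "\<forall>u. 0 < u \<and> u < \<beta> \<longrightarrow> f u < 0"
  shows "\<exists>C\<ge>0. \<forall>u. 0 < u \<and> u < M \<longrightarrow> f u \<le> C"
proof -
  have ic: "isCont f x" if "x \<noteq> 0" for x
  proof -
    have xin: "x \<in> - {0}" using that by simp
    have "\<exists>e>0. \<exists>L. L-lipschitz_on (cball x e \<inter> - {0}) f"
      using fl xin unfolding loc_lipschitz_on_def by (rule bspec)
    then obtain e L where e: "e > 0" and L: "L-lipschitz_on (cball x e \<inter> - {0}) f"
      by blast
    have "continuous_on (cball x e \<inter> - {0}) f" using L by (rule lipschitz_on_continuous_on)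
    moreover have "interior (cball x e \<inter> - {0}) = ball x e \<inter> - {0}"
      by (simp add: interior_Int interior_open open_Compl)
    moreover have "x \<in> ball x e \<inter> - {0}" using e that by simp
    ultimately have "continuous_on (cball x e \<inter> - {0}) f" "x \<in> interior (cball x e \<inter> - {0})" by auto
    then show ?thesis by (rule continuous_on_interior)
  qed
  have "continuous_on {\<beta>..M} f"
  proof (rule continuous_at_imp_continuous_on, intro ballI)
    fix x assume "x \<in> {\<beta>..M}"
    then have "x \<noteq> 0" using b by auto
    then show "isCont f x" by (rule ic)
  qed
  then have "bounded (f ` {\<beta>..M})"
    by (intro compact_imp_bounded compact_continuous_image[OF _ compact_Icc])
  then obtain a where a: "\<forall>y\<in>f ` {\<beta>..M}. \<bar>y\<bar> \<le> a" unfolding bounded_real by (elim exE)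
  show ?thesis
  proof (intro exI[of _ "max 0 a"] conjI allI impI)
    fix u assume u: "0 < u \<and> u < M"
    show "f u \<le> max 0 a"
    proof (cases "u < \<beta>")
      case True then have "f u < 0" using neg u by blast
      then show ?thesis by linarith
    next
      case False then have "\<bar>f u\<bar> \<le> a" using a u by auto
      then show ?thesis by linarith
    qed
  qed simp
qed

theorem lemma2p4:
  fixes N :: nat and p l m \<beta> R \<alpha> \<alpha>1 K0 K1 :: real
    and f g1 g2 K K' :: "real \<Rightarrow> real"
    and v :: "real \<Rightarrow> real \<Rightarrow> real"
  assumes N: "N > 2" and p: "1 < p" "p < real N"
    and f_odd: "\<forall>u. u \<noteq> 0 \<longrightarrow> f (- u) = - f u"
    and f_lip: "loc_lipschitz_on (- {0}) f"
    and H1: "loc_lipschitz_on UNIV g1" "l > p - 1"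
      "\<exists>U. \<forall>u. \<bar>u\<bar> \<ge> U \<longrightarrow> f u = \<bar>u\<bar> powr (l - 1) * u + g1 u"
      "((\<lambda>u. \<bar>g1 u\<bar> / \<bar>u\<bar> powr l) \<longlongrightarrow> 0) at_top"
    and H2: "loc_lipschitz_on UNIV g2" "g2 0 = 0" "0 < m" "m < 1"
      "\<exists>\<delta>>0. \<forall>u. u \<noteq> 0 \<and> \<bar>u\<bar> < \<delta> \<longrightarrow> f u = - (1 / (\<bar>u\<bar> powr (m - 1) * u)) + g2 u"
    and H3: "\<beta> > 0" "f \<beta> = 0" "\<forall>u>0. f u = 0 \<longrightarrow> u = \<beta>"
      "\<forall>u. 0 < u \<and> u < \<beta> \<longrightarrow> f u < 0" "\<forall>u>\<beta>. f u > 0"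
    and H4: "R > 0" "\<forall>r\<ge>R. K r > 0"
      "\<forall>r\<ge>R. (K has_real_derivative K' r) (at r within {R..})"
      "continuous_on {R..} K'"
      "\<forall>r\<ge>R. r * K' r / K r > - ((real N - 1) * p / (p - 1))"
      "K0 > 0" "K1 > 0"
      "\<forall>r\<ge>R. K0 / r powr \<alpha> \<le> K r \<and> K r \<le> K1 / r powr \<alpha>1"
      "real N + m * (real N - p) / (p - 1) < \<alpha>1" "\<alpha>1 \<le> \<alpha>" "\<alpha> < 2 * (real N - 1)"
    and sol: "\<forall>a>0. ivp_solution (hfun N p K) f p a (v a) (R powr ((p - real N) / (p - 1)))"
  shows "filterlim (\<lambda>a. Sup (v a ` {0..R powr ((p - real N) / (p - 1))})) at_top at_top"
proof -
  define T where "T = R powr ((p - real N) / (p - 1))"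
  have T: "T > 0" unfolding T_def using H4(1) by simp
  have "m * (real N - p) / (p - 1) > 0" using H2(3) p by simp
  then have a1: "\<alpha>1 > real N" using H4(9) by linarith
  obtain H where H: "H \<ge> 0" and hint: "\<forall>t\<in>{0..T}. hfun N p K integrable_on {0<..<t}
           \<and> integral {0<..<t} (hfun N p K) \<le> H \<and> (\<forall>s\<in>{0<..<t}. 0 \<le> hfun N p K s)"
    using partB[OF p H4(1) H4(7) H4(2) H4(3) _ a1] H4(8) unfolding T_def by blast
  show ?thesis unfolding T_def[symmetric] filterlim_at_top
  proof
    fix Z :: real
    define M where "M = max Z 1"
    have M: "M > 0" "Z \<le> M" unfolding M_def by auto
    obtain C where C: "C \<ge> 0" and fC: "\<forall>u. 0 < u \<and> u < M \<longrightarrow> f u \<le> C"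
      using partA[OF f_lip H3(1) H3(4)] by blast
    define B where "B = M / T + 1"
    have B: "B > 0" using M T unfolding B_def by (simp add: add_pos_pos)
    define X where "X = C * H + B powr (p - 1)"
    have X: "X > 0" unfolding X_def using B C H by (simp add: add_nonneg_pos)
    define A0 where "A0 = max 1 (X powr (1 / (p - 1)))"
    have "\<forall>a\<ge>A0. Z \<le> Sup (v a ` {0..T})"
    proof (intro allI impI)
      fix a assume aA: "A0 \<le> a"
      have a: "a > 0" using aA unfolding A0_def by simp
      have "X = (X powr (1 / (p - 1))) powr (p - 1)" using X p by (simp add: powr_powr)
      also have "\<dots> \<le> a powr (p - 1)"
        using aA p unfolding A0_def by (intro powr_mono2) auto
      finally have aX: "C * H + B powr (p - 1) \<le> a powr (p - 1)" unfolding X_def .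
      have sol': "ivp_solution (hfun N p K) f p a (v a) T" using sol a unfolding T_def by blast
      obtain v' where "\<forall>t\<in>{0..T}. (v a has_real_derivative v' t) (at t within {0..T})"
        using sol' unfolding ivp_solution_def by blast
      then have "continuous_on {0..T} (v a)"
        by (metis DERIV_continuous continuous_on_eq_continuous_within)
      then have bd: "bdd_above (v a ` {0..T})"
        by (intro bounded_imp_bdd_above compact_imp_bounded compact_continuous_image) auto
      show "Z \<le> Sup (v a ` {0..T})"
      proof (rule ccontr)
        assume "\<not> Z \<le> Sup (v a ` {0..T})"
        then have lt: "Sup (v a ` {0..T}) < M" using M by linarith
        have vM: "\<forall>t\<in>{0..T}. v a t < M"
          using cSup_upper[OF _ bd] lt by (meson imageI order_le_less_trans)
        have "v a T \<ge> B * T"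
          by (rule partC[OF T p(1) a sol' hint fC C vM aX B])
        moreover have "B * T = M + T" unfolding B_def using T by (simp add: field_simps)
        moreover have "v a T < M" using vM T by auto
        ultimately show False using T by linarith
      qed
    qed
    then show "eventually (\<lambda>a. Z \<le> Sup (v a ` {0..T})) at_top"
      unfolding eventually_at_top_linorder by blast
  qed
qed

end
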